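(* Let $1\le k<n$ and $A\in\mathbb{H}_n$. The following are equivalent: (a) $A=\gamma I$ for some $\gamma\in\mathbb{R}$; (b) $A\parallel B$ for every $B\in\mathbb{H}_n$; (c) $A\parallel P$ for every rank-$k$ orthogonal projection $P\in\mathbb{H}_n$.
   Context: $\mathbb{H}_n$ is the real space of $n\times n$ Hermitian matrices. $w_k(A)=\max\{|\operatorname{tr}(AP)|: P=P^*=P^2,\operatorname{tr}P=k\}$. For $A,B\in\mathbb{H}_n$, $A\parallel B$ means $w_k(A+\mu B)=w_k(A)+w_k(B)$ for some $\mu\in\{1,-1\}$. *)

theory Defs
  imports "HOL-Analysis.Analysis"
begin

definition hermitian :: "complex^'n^'n \<Rightarrow> bool" where
  "hermitian A \<longleftrightarrow> (\<forall>i j. A$i$j = cnj (A$j$i))"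

definition orth_proj :: "complex^'n^'n \<Rightarrow> bool" where
  "orth_proj P \<longleftrightarrow> hermitian P \<and> P ** P = P"

definition wk :: "nat \<Rightarrow> complex^'n^'n \<Rightarrow> real" where
  "wk k A = Sup {cmod (trace (A ** P)) | P. orth_proj P \<and> trace P = of_nat k}"

definition wk_parallel :: "nat \<Rightarrow> complex^'n^'n \<Rightarrow> complex^'n^'n \<Rightarrow> bool" where
  "wk_parallel k A B \<longleftrightarrow> (\<exists>\<mu>\<in>{1, -1::real}. wk k (A + \<mu> *\<^sub>R B) = wk k A + wk k B)"

end

theory Submission
  imports Defs
begin


definition ct :: "complex^'n^'n \<Rightarrow> complex^'n^'n" where
  "ct X = (\<chi> a b. cnj (X$b$a))"

lemma herm_ct: "hermitian X \<longleftrightarrow> ct X = X"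
  unfolding hermitian_def ct_def vec_eq_iff vec_lambda_beta by (metis complex_cnj_cnj)

lemma ct_mult: "ct (X ** Y) = ct Y ** ct X"
  by (simp add: ct_def matrix_matrix_mult_def vec_eq_iff mult.commute)

lemma mult_cnj_sq: "z * cnj z = complex_of_real ((cmod z)^2)"
  using complex_norm_square[of z] by simp

lemma trace_frob: "trace (X ** ct X) = complex_of_real (\<Sum>a\<in>UNIV. \<Sum>b\<in>UNIV. (cmod (X$a$b))^2)"
  by (simp add: trace_def ct_def matrix_matrix_mult_def mult_cnj_sq)

lemma frob_zero: assumes "trace (X ** ct X) = 0" shows "X = 0"
proof -
  have "complex_of_real (\<Sum>a\<in>UNIV. \<Sum>b\<in>UNIV. (cmod (X$a$b))^2) = 0" using assms by (simp only: trace_frob)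
  then have "(\<Sum>a\<in>UNIV. \<Sum>b\<in>UNIV. (cmod (X$a$b))^2) = 0" by (simp only: of_real_eq_0_iff)
  then have "\<forall>a. (\<Sum>b\<in>UNIV. (cmod (X$a$b))^2) = 0"
    by (simp add: sum_nonneg_eq_0_iff sum_nonneg)
  then have "\<forall>a b. (cmod (X$a$b))^2 = 0"
    by (simp add: sum_nonneg_eq_0_iff)
  then show ?thesis by (simp add: vec_eq_iff)
qed

lemma frob_nonneg: "Re (trace (X ** ct X)) \<ge> 0" "Im (trace (X ** ct X)) = 0"
  by (auto simp: trace_frob intro!: sum_nonneg)

lemma trace_PQ:
  assumes "orth_proj P" "orth_proj Q"
  shows "trace (P ** Q) = trace ((P ** Q) ** ct (P ** Q))"
proof -
  have cP: "ct P = P" and cQ: "ct Q = Q" and PP: "P ** P = P" and QQ: "Q ** Q = Q"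
    using assms by (auto simp: orth_proj_def herm_ct)
  have "trace ((P ** Q) ** ct (P ** Q)) = trace ((P ** Q) ** (Q ** P))"
    by (simp add: ct_mult cP cQ)
  also have "\<dots> = trace (P ** (Q ** P))"
  proof -
    have "(P ** Q) ** (Q ** P) = P ** ((Q ** Q) ** P)" by (simp only: matrix_mul_assoc)
    then show ?thesis by (simp only: QQ)
  qed
  also have "\<dots> = trace ((Q ** P) ** P)" by (rule trace_mul_sym)
  also have "\<dots> = trace (Q ** P)" proof -
    have "(Q ** P) ** P = Q ** (P ** P)" by (simp only: matrix_mul_assoc)
    then show ?thesis by (simp only: PP)
  qed
  also have "\<dots> = trace (P ** Q)" by (rule trace_mul_sym)
  finally show ?thesis by simp
qed

lemma mm_sub_l: "(X::complex^'n^'n) ** (Y - Z) = X ** Y - X ** Z"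
  by (simp add: matrix_matrix_mult_def vec_eq_iff sum_subtractf right_diff_distrib)

lemma mm_sub_r: "((Y::complex^'n^'n) - Z) ** X = Y ** X - Z ** X"
  by (simp add: matrix_matrix_mult_def vec_eq_iff sum_subtractf left_diff_distrib)

lemma ct_sub: "ct (X - Y) = ct X - ct Y"
  by (simp add: ct_def vec_eq_iff)

lemma ct_one: "ct (mat 1) = mat 1"
  by (simp add: ct_def vec_eq_iff mat_def)

lemma orth_proj_compl: assumes "orth_proj Q" shows "orth_proj (mat 1 - Q)"
proof -
  have cQ: "ct Q = Q" and QQ: "Q ** Q = Q" using assms by (auto simp: orth_proj_def herm_ct)
  have "ct (mat 1 - Q) = mat 1 - Q" by (simp add: ct_sub ct_one cQ)
  moreover have "(mat 1 - Q) ** (mat 1 - Q) = mat 1 - Q"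
    by (simp add: mm_sub_l mm_sub_r QQ)
  ultimately show ?thesis by (simp add: orth_proj_def herm_ct)
qed

lemma trace_PQ_nonneg: assumes "orth_proj P" "orth_proj Q"
  shows "Im (trace (P ** Q)) = 0" "Re (trace (P ** Q)) \<ge> 0"
  using trace_PQ[OF assms] frob_nonneg by metis+

lemma trace_PQ_le: assumes "orth_proj P" "orth_proj Q"
  shows "Re (trace (P ** Q)) \<le> Re (trace P)"
proof -
  have "Re (trace (P ** (mat 1 - Q))) \<ge> 0"
    using trace_PQ_nonneg(2)[OF assms(1) orth_proj_compl[OF assms(2)]] .
  then show ?thesis by (simp add: mm_sub_l trace_sub)
qed

lemma proj_eq: assumes "orth_proj P" "orth_proj Q" "trace (P ** Q) = trace P" "trace (P ** Q) = trace Q"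
  shows "P = Q"
proof -
  have "trace (P ** (mat 1 - Q)) = 0" using assms(3) by (simp add: mm_sub_l trace_sub)
  then have "P ** (mat 1 - Q) = 0"
    using trace_PQ[OF assms(1) orth_proj_compl[OF assms(2)]] frob_zero by metis
  then have 1: "P = P ** Q" by (simp add: mm_sub_l)
  have "trace ((mat 1 - P) ** Q) = 0" using assms(4) by (simp add: mm_sub_r trace_sub)
  then have "(mat 1 - P) ** Q = 0"
    using trace_PQ[OF orth_proj_compl[OF assms(1)] assms(2)] frob_zero by metis
  then have 2: "Q = P ** Q" by (simp add: mm_sub_r)
  show ?thesis using 1 2 by simp
qed

lemma proj_entry_le1: assumes "orth_proj (Q::complex^'n^'n)" shows "cmod (Q$a$b) \<le> 1"
proof -
  have cQ: "ct Q = Q" and QQ: "Q ** Q = Q" using assms by (auto simp: orth_proj_def herm_ct)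
  have sym: "Q$l$a = cnj (Q$a$l)" for l
  proof -
    have "ct Q $ l $ a = Q $ l $ a" using cQ by simp
    then show ?thesis by (simp add: ct_def)
  qed
  define s where "s = (\<Sum>l\<in>UNIV. (cmod (Q$a$l))^2)"
  have "Q$a$a = (Q ** Q)$a$a" using QQ by simp
  also have "\<dots> = (\<Sum>l\<in>UNIV. Q$a$l * Q$l$a)"
    by (simp add: matrix_matrix_mult_def)
  also have "\<dots> = (\<Sum>l\<in>UNIV. Q$a$l * cnj (Q$a$l))"
  proof (rule sum.cong[OF refl])
    fix l show "Q$a$l * Q$l$a = Q$a$l * cnj (Q$a$l)" by (simp only: sym[of l])
  qed
  also have "\<dots> = complex_of_real s" by (simp add: s_def mult_cnj_sq)
  finally have qa: "Q$a$a = complex_of_real s" .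
  have s0: "s \<ge> 0" unfolding s_def by (rule sum_nonneg) simp
  have le: "(cmod (Q$a$l))^2 \<le> s" for l
    unfolding s_def by (rule member_le_sum) auto
  from le[of a] have "s^2 \<le> s" by (simp add: qa abs_of_nonneg s0)
  then have s1: "s \<le> 1"
  proof -
    assume h: "s^2 \<le> s"
    show "s \<le> 1"
    proof (rule ccontr)
      assume "\<not> s \<le> 1"
      then have "s * 1 < s * s" using s0 by (intro mult_strict_left_mono) auto
      then show False using h by (simp add: power2_eq_square)
    qed
  qed
  from le[of b] s1 have "(cmod (Q$a$b))^2 \<le> 1" by simp
  then show ?thesis by (simp add: power_le_one_iff abs_le_square_iff)
qed

lemma norm_vec_le_sum: "norm (x::'a::real_normed_vector^'n) \<le> (\<Sum>i\<in>UNIV. norm (x$i))"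
  unfolding norm_vec_def by (rule L2_set_le_sum) simp

definition Pk :: "nat \<Rightarrow> (complex^'n^'n) set" where
  "Pk k = {Q. orth_proj Q \<and> trace Q = of_nat k}"

lemma orth_proj_iff: "orth_proj Q \<longleftrightarrow> (\<forall>a b. (Q ** Q)$a$b = Q$a$b) \<and> (\<forall>a b. Q$a$b = cnj (Q$b$a))"
  unfolding orth_proj_def hermitian_def vec_eq_iff by blast

lemma compact_Pk: "compact (Pk k)"
proof (rule compact_eq_bounded_closed[THEN iffD2], rule conjI)
  show "bounded (Pk k)"
    unfolding bounded_iff
  proof (intro exI ballI)
    fix Q :: "complex^'n^'n" assume "Q \<in> Pk k"
    then have op: "orth_proj Q" by (simp add: Pk_def)
    have "norm Q \<le> (\<Sum>a\<in>UNIV. norm (Q$a))" by (rule norm_vec_le_sum)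
    also have "\<dots> \<le> (\<Sum>a\<in>(UNIV::'n set). \<Sum>b\<in>(UNIV::'n set). 1)"
    proof (rule sum_mono)
      fix a
      have "norm (Q$a) \<le> (\<Sum>b\<in>UNIV. norm (Q$a$b))" by (rule norm_vec_le_sum)
      also have "\<dots> \<le> (\<Sum>b\<in>(UNIV::'n set). 1)"
        by (rule sum_mono) (simp add: proj_entry_le1[OF op])
      finally show "norm (Q$a) \<le> (\<Sum>b\<in>(UNIV::'n set). 1)" .
    qed
    finally show "norm Q \<le> (\<Sum>a\<in>(UNIV::'n set). \<Sum>b\<in>(UNIV::'n set). (1::real))" .
  qed
  have eq: "Pk k = {Q. (\<forall>a b. (Q ** Q)$a$b = Q$a$b) \<and> (\<forall>a b. Q$a$b = cnj (Q$b$a)) \<and> trace Q = of_nat k}"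
    by (simp add: Pk_def orth_proj_iff)
  show "closed (Pk k)" unfolding eq matrix_matrix_mult_def trace_def
    by (intro closed_Collect_conj closed_Collect_all closed_Collect_eq continuous_intros)
qed

lemma wk_Pk: "wk k A = Sup ((\<lambda>Q. cmod (trace (A ** Q))) ` Pk k)"
  unfolding wk_def Pk_def by (rule arg_cong[where f=Sup]) blast

lemma cont_trA: "continuous_on S (\<lambda>Q::complex^'n^'n. cmod (trace (A ** Q)))"
  unfolding trace_def matrix_matrix_mult_def by (intro continuous_intros)

lemma wk_attain: fixes A :: "complex^'n^'n" assumes "Pk k \<noteq> ({}::(complex^'n^'n) set)"
  shows "\<exists>Q0\<in>Pk k. wk k A = cmod (trace (A ** Q0)) \<and> (\<forall>Q\<in>Pk k. cmod (trace (A ** Q)) \<le> wk k A)"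
proof -
  have "\<exists>x\<in>Pk k. \<forall>y\<in>Pk k. cmod (trace (A ** y)) \<le> cmod (trace (A ** x))"
    by (rule continuous_attains_sup[OF compact_Pk assms]) (rule cont_trA)
  then obtain Q0 where Q0: "Q0 \<in> Pk k" "\<forall>Q\<in>Pk k. cmod (trace (A ** Q)) \<le> cmod (trace (A ** Q0))"
    by blast
  have "wk k A = cmod (trace (A ** Q0))" unfolding wk_Pk
    by (rule cSup_eq_maximum) (use Q0 in auto)
  then show ?thesis using Q0 by auto
qed

lemma wk_le: assumes "Q \<in> Pk k" shows "cmod (trace (A ** Q)) \<le> wk k A"
  using wk_attain[of k A] assms by blast

lemma wk_eqI: assumes "Q0 \<in> Pk k" "\<And>Q. Q \<in> Pk k \<Longrightarrow> cmod (trace (A ** Q)) \<le> c" "cmod (trace (A ** Q0)) = c"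
  shows "wk k A = c"
  unfolding wk_Pk by (rule cSup_eq_maximum) (use assms in auto)

lemma mm_add_r: "((Y::complex^'n^'n) + Z) ** X = Y ** X + Z ** X"
  by (simp add: matrix_matrix_mult_def vec_eq_iff sum.distrib distrib_right)

lemma mm_scaleR_l: "((c::real) *\<^sub>R (Y::complex^'n^'n)) ** X = c *\<^sub>R (Y ** X)"
  by (simp add: matrix_matrix_mult_def vec_eq_iff scaleR_sum_right)

lemma trace_scaleR: "trace ((c::real) *\<^sub>R (Y::complex^'n^'n)) = c *\<^sub>R trace Y"
  by (simp add: trace_def scaleR_sum_right)

lemma wk_proj: assumes "P \<in> Pk k" shows "wk k P = real k"
proof (rule wk_eqI[OF assms])
  have op: "orth_proj P" and tP: "trace P = of_nat k" using assms by (auto simp: Pk_def)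
  show "cmod (trace (P ** Q)) \<le> real k" if "Q \<in> Pk k" for Q
  proof -
    have oq: "orth_proj Q" using that by (simp add: Pk_def)
    have "cmod (trace (P ** Q)) = Re (trace (P ** Q))"
      using trace_PQ_nonneg[OF op oq] by (simp add: cmod_eq_Re)
    also have "\<dots> \<le> Re (trace P)" by (rule trace_PQ_le[OF op oq])
    finally show ?thesis by (simp add: tP)
  qed
  have "P ** P = P" using op by (simp add: orth_proj_def)
  then show "cmod (trace (P ** P)) = real k" by (simp add: tP)
qed

lemma parallel_proj:
  fixes A P :: "complex^'n^'n"
  assumes P: "P \<in> Pk k" and par: "wk_parallel k A P"
  shows "cmod (trace (A ** P)) = wk k A"
proof -
  have op: "orth_proj P" and tP: "trace P = of_nat k" using P by (auto simp: Pk_def)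
  obtain \<mu> :: real where mu: "\<mu> \<in> {1, -1}" and eq0: "wk k (A + \<mu> *\<^sub>R P) = wk k A + wk k P"
  proof -
    from par obtain m :: real where "m \<in> {1, -1}" "wk k (A + m *\<^sub>R P) = wk k A + wk k P"
      unfolding wk_parallel_def by (rule bexE)
    then show ?thesis by (rule that)
  qed
  have eq: "wk k (A + \<mu> *\<^sub>R P) = wk k A + real k" using eq0 wk_proj[OF P] by simp
  have ne: "Pk k \<noteq> ({}::(complex^'n^'n) set)" using P by auto
  obtain Q0 where Q0: "Q0 \<in> Pk k" and w0: "wk k (A + \<mu> *\<^sub>R P) = cmod (trace ((A + \<mu> *\<^sub>R P) ** Q0))"
  proof -
    from wk_attain[OF ne, of "A + \<mu> *\<^sub>R P"] obtain Q where
      "Q \<in> Pk k" "wk k (A + \<mu> *\<^sub>R P) = cmod (trace ((A + \<mu> *\<^sub>R P) ** Q)) \<and> (\<forall>Q'\<in>Pk k. cmod (trace ((A + \<mu> *\<^sub>R P) ** Q')) \<le> wk k (A + \<mu> *\<^sub>R P))"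
      by (rule bexE)
    then show ?thesis using that by simp
  qed
  have oq: "orth_proj Q0" and tQ: "trace Q0 = of_nat k" using Q0 by (auto simp: Pk_def)
  define t where "t = trace (P ** Q0)"
  have tIm: "Im t = 0" and tRe0: "Re t \<ge> 0" using trace_PQ_nonneg[OF op oq] by (auto simp: t_def)
  have tle: "Re t \<le> real k" using trace_PQ_le[OF op oq] by (simp add: t_def tP)
  have amu: "\<bar>\<mu>\<bar> = 1" using mu by auto
  have split: "trace ((A + \<mu> *\<^sub>R P) ** Q) = trace (A ** Q) + \<mu> *\<^sub>R trace (P ** Q)" for Q
    by (simp add: mm_add_r mm_scaleR_l trace_add trace_scaleR)
  have "wk k A + real k = cmod (trace (A ** Q0) + \<mu> *\<^sub>R t)" using eq w0 split t_def by simp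
  also have "\<dots> \<le> cmod (trace (A ** Q0)) + cmod (\<mu> *\<^sub>R t)" by (rule norm_triangle_ineq)
  also have "cmod (\<mu> *\<^sub>R t) = Re t" using amu tIm tRe0 by (simp add: cmod_eq_Re)
  also have "cmod (trace (A ** Q0)) \<le> wk k A" by (rule wk_le[OF Q0])
  finally have "Re t \<ge> real k" by simp
  with tle tIm have "t = of_nat k" by (simp add: complex_eq_iff)
  then have "P = Q0" using proj_eq[OF op oq] by (simp add: t_def tP tQ)
  then have tPP: "trace (P ** P) = of_nat k" using \<open>t = of_nat k\<close> t_def by simp
  have "wk k A + real k = cmod (trace (A ** P) + \<mu> *\<^sub>R trace (P ** P))"
    using eq w0 split \<open>P = Q0\<close> by simp
  also have "\<dots> \<le> cmod (trace (A ** P)) + cmod (\<mu> *\<^sub>R trace (P ** P))" by (rule norm_triangle_ineq)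
  also have "cmod (\<mu> *\<^sub>R trace (P ** P)) = real k" using amu tPP by simp
  finally have "wk k A \<le> cmod (trace (A ** P))" by simp
  moreover have "cmod (trace (A ** P)) \<le> wk k A" by (rule wk_le[OF P])
  ultimately show ?thesis by simp
qed



lemma trace_ct: "trace (ct X) = cnj (trace X)"
  by (simp add: trace_def ct_def)

lemma trace_herm_real: assumes "hermitian B" "hermitian Q"
  shows "Im (trace (B ** Q)) = 0"
proof -
  have cB: "ct B = B" and cQ: "ct Q = Q" using assms by (auto simp: herm_ct)
  have "cnj (trace (B ** Q)) = trace (ct (B ** Q))" by (simp add: trace_ct)
  also have "\<dots> = trace (Q ** B)" by (simp add: ct_mult cB cQ)
  also have "\<dots> = trace (B ** Q)" by (rule trace_mul_sym)
  finally show ?thesis by (metis Reals_cnj_iff complex_is_Real_iff)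
qed

lemma trace_mat_mult: "trace (mat c ** (Q::complex^'n^'n)) = c * trace Q"
proof -
  have "mat c ** Q = (\<chi> a b. c * Q$a$b)"
    by (simp add: vec_eq_iff matrix_matrix_mult_def mat_def if_distrib if_distribR sum.delta cong: if_cong)
  then show ?thesis by (simp add: trace_def sum_distrib_left)
qed

lemma abs_add_same_sign: "(x::real) * y \<ge> 0 \<Longrightarrow> \<bar>x + y\<bar> = \<bar>x\<bar> + \<bar>y\<bar>"
  by (cases "x \<ge> 0"; cases "y \<ge> 0") (auto simp: mult_nonneg_nonpos2 zero_le_mult_iff)

lemma scalar_parallel:
  fixes B :: "complex^'n^'n"
  assumes hB: "hermitian B" and ne: "Pk k \<noteq> ({}::(complex^'n^'n) set)"
  shows "wk_parallel k (mat (complex_of_real \<gamma>)) B"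
proof -
  define C :: "complex^'n^'n" where "C = mat (complex_of_real \<gamma>)"
  obtain Q0 where Q0: "Q0 \<in> Pk k" and w0: "wk k B = cmod (trace (B ** Q0))"
  proof -
    from wk_attain[OF ne, of B] obtain Q where
      "Q \<in> Pk k" "wk k B = cmod (trace (B ** Q)) \<and> (\<forall>Q'\<in>Pk k. cmod (trace (B ** Q')) \<le> wk k B)"
      by (rule bexE)
    then show ?thesis using that by simp
  qed
  have hQ0: "hermitian Q0" using Q0 by (simp add: Pk_def orth_proj_def)
  define s where "s = Re (trace (B ** Q0))"
  have s0: "trace (B ** Q0) = complex_of_real s"
    using trace_herm_real[OF hB hQ0] by (simp add: s_def complex_eq_iff)
  define \<mu> :: real where "\<mu> = (if \<gamma> * s \<ge> 0 then 1 else -1)"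
  have mu: "\<mu> \<in> {1, -1}" by (simp add: \<mu>_def)
  have amu: "\<bar>\<mu>\<bar> = 1" by (simp add: \<mu>_def)
  have sgn: "(\<gamma> * real k) * (\<mu> * s) \<ge> 0"
  proof -
    have "\<gamma> * \<mu> * s \<ge> 0" by (simp add: \<mu>_def)
    then have "real k * (\<gamma> * \<mu> * s) \<ge> 0" by simp
    then show ?thesis by (simp add: algebra_simps)
  qed
  have trC: "trace (C ** Q) = complex_of_real (\<gamma> * real k)" if "Q \<in> Pk k" for Q
    using that by (simp add: C_def trace_mat_mult Pk_def)
  have split: "trace ((C + \<mu> *\<^sub>R B) ** Q) = trace (C ** Q) + \<mu> *\<^sub>R trace (B ** Q)" for Q :: "complex^'n^'n"
    by (simp add: mm_add_r mm_scaleR_l trace_add trace_scaleR)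
  have wC: "wk k C = \<bar>\<gamma>\<bar> * real k"
    by (rule wk_eqI[OF Q0]) (simp_all add: trC Q0 norm_mult)
  have wCB: "wk k (C + \<mu> *\<^sub>R B) = \<bar>\<gamma>\<bar> * real k + wk k B"
  proof (rule wk_eqI[OF Q0])
    fix Q :: "complex^'n^'n" assume Q: "Q \<in> Pk k"
    have "cmod (trace ((C + \<mu> *\<^sub>R B) ** Q)) \<le> cmod (trace (C ** Q)) + cmod (\<mu> *\<^sub>R trace (B ** Q))"
      unfolding split by (rule norm_triangle_ineq)
    also have "\<dots> = \<bar>\<gamma>\<bar> * real k + cmod (trace (B ** Q))"
      using Q amu by (simp add: trC abs_mult norm_mult)
    also have "\<dots> \<le> \<bar>\<gamma>\<bar> * real k + wk k B" using wk_le[OF Q] by simp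
    finally show "cmod (trace ((C + \<mu> *\<^sub>R B) ** Q)) \<le> \<bar>\<gamma>\<bar> * real k + wk k B" .
  next
    have "trace ((C + \<mu> *\<^sub>R B) ** Q0) = complex_of_real (\<gamma> * real k + \<mu> * s)"
      unfolding split by (simp add: trC[OF Q0] s0 scaleR_conv_of_real)
    then have "cmod (trace ((C + \<mu> *\<^sub>R B) ** Q0)) = \<bar>\<gamma> * real k + \<mu> * s\<bar>" by (simp only: norm_of_real)
    also have "\<dots> = \<bar>\<gamma>\<bar> * real k + \<bar>s\<bar>" using abs_add_same_sign[OF sgn] amu by (simp add: abs_mult)
    also have "\<bar>s\<bar> = wk k B" using w0 s0 by simp
    finally show "cmod (trace ((C + \<mu> *\<^sub>R B) ** Q0)) = \<bar>\<gamma>\<bar> * real k + wk k B" .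
  qed
  show ?thesis unfolding wk_parallel_def C_def[symmetric]
  proof (rule bexI[OF _ mu])
    show "wk k (C + \<mu> *\<^sub>R B) = wk k C + wk k B" using wC wCB by simp
  qed
qed




lemma sum_ij: assumes "i \<noteq> j" "\<And>l. l \<noteq> i \<Longrightarrow> l \<noteq> j \<Longrightarrow> g l = 0"
  shows "sum g (UNIV::'n::finite set) = g i + g j"
proof -
  have "sum g UNIV = sum g {i, j}"
    by (rule sum.mono_neutral_right) (use assms in auto)
  then show ?thesis using assms(1) by simp
qed

definition Dm :: "'n set \<Rightarrow> complex^'n^'n" where
  "Dm S = (\<chi> a b. if a = b \<and> a \<in> S then 1 else 0)"

lemma Dm_left: "(Dm S ** X)$a$b = (if a \<in> S then X$a$b else 0)"
  unfolding matrix_matrix_mult_def Dm_def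
  by (cases "a \<in> S") (auto simp: if_distrib if_distribR sum.delta cong: if_cong)

lemma Dm_right: "(X ** Dm S)$a$b = (if b \<in> S then X$a$b else 0)"
proof -
  have "(X ** Dm S)$a$b = (\<Sum>k\<in>UNIV. if k = b then (if b \<in> S then X$a$b else 0) else 0)"
    unfolding matrix_matrix_mult_def Dm_def vec_lambda_beta by (intro sum.cong refl) auto
  then show ?thesis by simp
qed

lemma Dm_herm: "ct (Dm S) = Dm S"
  by (auto simp: ct_def Dm_def vec_eq_iff)

lemma Dm_idem: "Dm S ** Dm S = Dm S"
  by (auto simp: vec_eq_iff Dm_left) (auto simp: Dm_def)

lemma trace_Dm: "trace (Dm S) = of_nat (card S)"
proof -
  have "trace (Dm S) = (\<Sum>a\<in>UNIV. if a \<in> S then 1 else 0)" by (simp add: trace_def Dm_def)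
  also have "\<dots> = of_nat (card S)" by (simp add: sum.If_cases)
  finally show ?thesis .
qed

lemma trace_A_Dm: "trace (A ** Dm S) = (\<Sum>a\<in>S. A$a$a)"
  unfolding trace_def Dm_right by (simp add: sum.If_cases)

definition Um :: "complex^'n \<Rightarrow> complex \<Rightarrow> complex^'n^'n" where
  "Um u N = (\<chi> a b. u$a * cnj (u$b) / N)"

lemma Um_herm: assumes "Im N = 0" shows "ct (Um u N) = Um u N"
proof -
  have "cnj N = N" using assms by (simp add: complex_eq_iff)
  then show ?thesis by (simp add: ct_def Um_def vec_eq_iff mult.commute)
qed

lemma Um_idem: assumes "(\<Sum>l\<in>UNIV. cnj (u$l) * u$l) = N" "N \<noteq> 0"
  shows "Um u N ** Um u N = Um u N"
proof -
  have "(Um u N ** Um u N)$a$b = Um u N $a$b" for a b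
  proof -
    have "(Um u N ** Um u N)$a$b = (\<Sum>l\<in>UNIV. (u$a * cnj (u$b) / (N*N)) * (cnj (u$l) * u$l))"
      unfolding matrix_matrix_mult_def Um_def by (simp, intro sum.cong refl) (simp add: mult_ac)
    also have "\<dots> = (u$a * cnj (u$b) / (N*N)) * (\<Sum>l\<in>UNIV. cnj (u$l) * u$l)"
      by (rule sum_distrib_left[symmetric])
    also have "\<dots> = (u$a * cnj (u$b) / (N*N)) * N" by (simp only: assms(1))
    also have "\<dots> = Um u N $a$b" using assms(2) by (simp add: Um_def)
    finally show ?thesis .
  qed
  then show ?thesis by (simp add: vec_eq_iff)
qed

lemma trace_Um: assumes "(\<Sum>l\<in>UNIV. cnj (u$l) * u$l) = N" "N \<noteq> 0"
  shows "trace (Um u N) = 1"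
proof -
  have "trace (Um u N) = (\<Sum>l\<in>UNIV. cnj (u$l) * u$l) / N"
    by (simp add: trace_def Um_def sum_divide_distrib mult.commute)
  then show ?thesis using assms by simp
qed

lemma trace_A_Um: "trace (A ** Um u N) = (\<Sum>a\<in>UNIV. \<Sum>b\<in>UNIV. cnj (u$a) * A$a$b * u$b) / N"
  by (simp add: trace_def Um_def matrix_matrix_mult_def sum_divide_distrib mult_ac)

lemma Dm_Um: assumes "\<forall>a\<in>S. u$a = 0" shows "Dm S ** Um u N = 0" "Um u N ** Dm S = 0"
  using assms by (auto simp: vec_eq_iff Dm_left Dm_right Um_def)

lemma indep_diag:
  fixes f :: "'n \<Rightarrow> 'a::field^'n"
  assumes fin: "finite I" and off: "\<And>a b. a \<in> I \<Longrightarrow> b \<in> I \<Longrightarrow> a \<noteq> b \<Longrightarrow> (f a)$b = 0"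
    and dia: "\<And>a. a \<in> I \<Longrightarrow> (f a)$a \<noteq> 0"
  shows "vec.independent (f ` I)" "card (f ` I) = card I"
proof -
  have inj: "inj_on f I"
  proof (rule inj_onI)
    fix a b assume ab: "a \<in> I" "b \<in> I" "f a = f b"
    show "a = b"
    proof (rule ccontr)
      assume "a \<noteq> b"
      then have "(f b)$a = 0" using off[of b a] ab by auto
      then show False using dia[of a] ab by simp
    qed
  qed
  then show "card (f ` I) = card I" by (rule card_image)
  show "vec.independent (f ` I)"
    unfolding vec.independent_explicit
  proof (intro conjI allI impI ballI)
    show "finite (f ` I)" using fin by simp
    fix c v assume sum0: "(\<Sum>v\<in>f ` I. c v *s v) = 0" and v: "v \<in> f ` I"
    then obtain b where b: "b \<in> I" "v = f b" by blast
    have "(\<Sum>a\<in>I. c (f a) *s f a) = 0" using sum0 by (simp add: sum.reindex[OF inj])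
    then have "(\<Sum>a\<in>I. c (f a) *s f a) $ b = 0" by simp
    then have "(\<Sum>a\<in>I. c (f a) * (f a)$b) = 0" by (simp add: sum_component)
    moreover have "(\<Sum>a\<in>I. c (f a) * (f a)$b) = c (f b) * (f b)$b"
    proof -
      have "(\<Sum>a\<in>I. c (f a) * (f a)$b) = c (f b) * (f b)$b + (\<Sum>a\<in>I - {b}. c (f a) * (f a)$b)"
        by (rule sum.remove[OF fin b(1)])
      moreover have "(\<Sum>a\<in>I - {b}. c (f a) * (f a)$b) = 0"
        by (rule sum.neutral) (use off b(1) in auto)
      ultimately show ?thesis by simp
    qed
    ultimately show "c v = 0" using dia[OF b(1)] b by simp
  qed
qed




definition uv :: "'n \<Rightarrow> 'n \<Rightarrow> complex \<Rightarrow> complex \<Rightarrow> complex^'n" where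
  "uv i j p q = (\<chi> l. if l = i then p else if l = j then q else 0)"

definition Nq :: "complex \<Rightarrow> complex \<Rightarrow> complex" where
  "Nq p q = complex_of_real ((cmod p)^2 + (cmod q)^2)"

definition Pm :: "'n set \<Rightarrow> 'n \<Rightarrow> 'n \<Rightarrow> complex \<Rightarrow> complex \<Rightarrow> complex^'n^'n" where
  "Pm S i j p q = Dm S + Um (uv i j p q) (Nq p q)"

lemma uv_i[simp]: "uv i j p q $ i = p" by (simp add: uv_def)
lemma uv_j[simp]: "i \<noteq> j \<Longrightarrow> uv i j p q $ j = q" by (simp add: uv_def)
lemma uv_other: "l \<noteq> i \<Longrightarrow> l \<noteq> j \<Longrightarrow> uv i j p q $ l = 0" by (simp add: uv_def)

lemma uv_norm: assumes "i \<noteq> j" shows "(\<Sum>l\<in>UNIV. cnj (uv i j p q $ l) * uv i j p q $ l) = Nq p q"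
proof -
  have "(\<Sum>l\<in>UNIV. cnj (uv i j p q $ l) * uv i j p q $ l) = cnj p * p + cnj q * q"
    by (subst sum_ij[OF assms]) (simp_all add: uv_other assms)
  also have "\<dots> = Nq p q" by (simp add: Nq_def mult.commute[of "cnj _"] mult_cnj_sq)
  finally show ?thesis .
qed

lemma Nq_nz: "p \<noteq> 0 \<Longrightarrow> Nq p q \<noteq> 0"
proof -
  assume "p \<noteq> 0"
  then have "(cmod p)^2 > 0" by simp
  then have "(cmod p)^2 + (cmod q)^2 > 0" by (simp add: add_pos_nonneg)
  then show ?thesis unfolding Nq_def of_real_eq_0_iff by linarith
qed

lemma Nq_Im: "Im (Nq p q) = 0" by (simp add: Nq_def)

lemma ct_add: "ct (X + Y) = ct X + ct Y" by (simp add: ct_def vec_eq_iff)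

context
  fixes S :: "'n::finite set" and i j :: 'n and p q :: complex
  assumes ij: "i \<noteq> j" and iS: "i \<notin> S" and jS: "j \<notin> S" and p0: "p \<noteq> 0"
begin

lemma uv_S: "\<forall>a\<in>S. uv i j p q $ a = 0"
proof
  fix a assume "a \<in> S"
  then have "a \<noteq> i" "a \<noteq> j" using iS jS by auto
  then show "uv i j p q $ a = 0" by (rule uv_other)
qed

lemma Pm_orth: "orth_proj (Pm S i j p q)"
proof -
  let ?D = "Dm S" and ?U = "Um (uv i j p q) (Nq p q)"
  have "ct (Pm S i j p q) = Pm S i j p q"
    by (simp add: Pm_def ct_add Dm_herm Um_herm Nq_Im)
  moreover have "Pm S i j p q ** Pm S i j p q = Pm S i j p q"
  proof -
    have "(?D + ?U) ** (?D + ?U) = (?D ** ?D + ?D ** ?U) + (?U ** ?D + ?U ** ?U)"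
      by (simp add: mm_add_r matrix_add_ldistrib)
    also have "\<dots> = ?D + ?U"
      by (simp add: Dm_idem Dm_Um[OF uv_S] Um_idem[OF uv_norm[OF ij] Nq_nz[OF p0]])
    finally show ?thesis by (simp add: Pm_def)
  qed
  ultimately show ?thesis by (simp add: orth_proj_def herm_ct)
qed

lemma Pm_trace: "trace (Pm S i j p q) = of_nat (card S + 1)"
  by (simp add: Pm_def trace_add trace_Dm trace_Um[OF uv_norm[OF ij] Nq_nz[OF p0]])

lemma Pm_trA: "trace (A ** Pm S i j p q) = (\<Sum>a\<in>S. A$a$a) +
   (cnj p * A$i$i * p + cnj p * A$i$j * q + (cnj q * A$j$i * p + cnj q * A$j$j * q)) / Nq p q"
proof -
  let ?u = "uv i j p q"
  have inner: "(\<Sum>b\<in>UNIV. cnj (?u$a) * A$a$b * ?u$b) = cnj (?u$a) * A$a$i * p + cnj (?u$a) * A$a$j * q" for a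
    by (subst sum_ij[OF ij]) (simp_all add: uv_other ij)
  have "(\<Sum>a\<in>UNIV. \<Sum>b\<in>UNIV. cnj (?u$a) * A$a$b * ?u$b) =
     (cnj p * A$i$i * p + cnj p * A$i$j * q + (cnj q * A$j$i * p + cnj q * A$j$j * q))"
    unfolding inner by (subst sum_ij[OF ij]) (simp_all add: uv_other ij)
  then show ?thesis
    by (simp add: Pm_def matrix_add_ldistrib trace_add trace_A_Dm trace_A_Um)
qed

lemma Pm_entry: "Pm S i j p q $ a $ b = (if a = b \<and> a \<in> S then 1 else 0) + uv i j p q $ a * cnj (uv i j p q $ b) / Nq p q"
  by (simp add: Pm_def Dm_def Um_def)

lemma Pm_rank: "rank (Pm S i j p q) = card S + 1"
proof -
  let ?P = "Pm S i j p q" and ?I = "insert i S"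
  let ?f = "\<lambda>a. row a ?P"
  have N0: "Nq p q \<noteq> 0" by (rule Nq_nz[OF p0])
  have fin: "finite ?I" by simp
  have off: "(?f a)$b = 0" if "a \<in> ?I" "b \<in> ?I" "a \<noteq> b" for a b
  proof -
    have "uv i j p q $ a * cnj (uv i j p q $ b) = 0"
      using that uv_S by auto
    then show ?thesis using that by (simp add: row_def Pm_entry)
  qed
  have dia: "(?f a)$a \<noteq> 0" if "a \<in> ?I" for a
  proof (cases "a = i")
    case True
    have "p * cnj p / Nq p q \<noteq> 0" using p0 N0 by simp
    then show ?thesis using True iS by (simp add: row_def Pm_entry)
  next
    case False
    then have "a \<in> S" using that by simp
    then show ?thesis using uv_S by (simp add: row_def Pm_entry)
  qed
  note ind = indep_diag[of ?I ?f, OF fin off dia]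
  have sub1: "?f ` ?I \<subseteq> rows ?P" by (auto simp: rows_def)
  have sub2: "rows ?P \<subseteq> vec.span (?f ` ?I)"
  proof
    fix v assume "v \<in> rows ?P"
    then obtain a where v: "v = row a ?P" by (auto simp: rows_def)
    show "v \<in> vec.span (?f ` ?I)"
    proof (cases "a \<in> ?I")
      case True then show ?thesis using v by (intro vec.span_base) auto
    next
      case False
      show ?thesis
      proof (cases "a = j")
        case True
        have "row j ?P = (q / p) *s row i ?P"
          using iS jS ij p0 by (simp add: vec_eq_iff row_def Pm_entry)
        moreover have "row i ?P \<in> vec.span (?f ` ?I)" by (intro vec.span_base) auto
        ultimately show ?thesis using v True by (simp add: vec.span_scale)
      next
        case aj: False
        have "row a ?P = 0" using False aj by (simp add: vec_eq_iff row_def Pm_entry uv_other)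
        then show ?thesis using v by (simp add: vec.span_zero)
      qed
    qed
  qed
  have "vec.dim (rows ?P) = card S + 1"
  proof (rule vec.dim_unique[OF sub1 sub2 ind(1)])
    have c1: "card (?f ` ?I) = card ?I" by (rule ind(2))
    have c2: "card ?I = card S + 1" using iS by (simp add: card_insert_disjoint)
    show "card (?f ` ?I) = card S + 1" using c1 c2 by (rule trans)
  qed
  then show ?thesis by (simp add: row_rank_def_gen)
qed

end




lemma alg:
  fixes x a b r w :: real
  assumes "\<bar>x + a\<bar> = w" "\<bar>x + b\<bar> = w" "\<bar>x + (a + b) / 2 + r\<bar> = w" "\<bar>x + (a + b) / 2 - r\<bar> = w"
    "\<bar>x + (4 * a + b) / 5 + 4 * r / 5\<bar> = w"
  shows "a = b \<and> r = 0"
  using assms by (auto simp: abs_if field_simps split: if_splits)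

lemma re_val:
  fixes A :: "complex^'n^'n"
  assumes hji: "A$j$i = cnj (A$i$j)"
  shows "Re ((cnj 1 * A$i$i * 1 + cnj 1 * A$i$j * 1 + (cnj 1 * A$j$i * 1 + cnj 1 * A$j$j * 1)) / Nq 1 1)
         = (Re (A$i$i) + Re (A$j$j)) / 2 + Re (A$i$j)"
    "Re ((cnj 1 * A$i$i * 1 + cnj 1 * A$i$j * (-1) + (cnj (-1) * A$j$i * 1 + cnj (-1) * A$j$j * (-1))) / Nq 1 (-1))
         = (Re (A$i$i) + Re (A$j$j)) / 2 - Re (A$i$j)"
    "Re ((cnj 2 * A$i$i * 2 + cnj 2 * A$i$j * 1 + (cnj 1 * A$j$i * 2 + cnj 1 * A$j$j * 1)) / Nq 2 1)
         = (4 * Re (A$i$i) + Re (A$j$j)) / 5 + 4 * Re (A$i$j) / 5"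
    "Re ((cnj 1 * A$i$i * 1 + cnj 1 * A$i$j * \<i> + (cnj \<i> * A$j$i * 1 + cnj \<i> * A$j$j * \<i>)) / Nq 1 \<i>)
         = (Re (A$i$i) + Re (A$j$j)) / 2 + (- Im (A$i$j))"
    "Re ((cnj 1 * A$i$i * 1 + cnj 1 * A$i$j * (-\<i>) + (cnj (-\<i>) * A$j$i * 1 + cnj (-\<i>) * A$j$j * (-\<i>))) / Nq 1 (-\<i>))
         = (Re (A$i$i) + Re (A$j$j)) / 2 - (- Im (A$i$j))"
    "Re ((cnj 2 * A$i$i * 2 + cnj 2 * A$i$j * \<i> + (cnj \<i> * A$j$i * 2 + cnj \<i> * A$j$j * \<i>)) / Nq 2 \<i>)
         = (4 * Re (A$i$i) + Re (A$j$j)) / 5 + 4 * (- Im (A$i$j)) / 5"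
    "Re ((cnj 1 * A$i$i * 1 + cnj 1 * A$i$j * 0 + (cnj 0 * A$j$i * 1 + cnj 0 * A$j$j * 0)) / Nq 1 0)
         = Re (A$i$i)"
  by (simp_all add: hji Nq_def Re_divide field_simps)

lemma c_to_a:
  fixes A :: "complex^'n^'n" and k :: nat
  assumes k1: "1 \<le> k" and kn: "k < CARD('n)" and hA: "hermitian A"
    and H: "\<forall>P::complex^'n^'n. orth_proj P \<and> rank P = k \<longrightarrow> wk_parallel k A P"
  shows "\<exists>\<gamma>::real. A = mat (complex_of_real \<gamma>)"
proof -
  have cA: "ct A = A" using hA herm_ct by blast
  have ent: "A$b$a = cnj (A$a$b)" for a b
  proof -
    have "ct A $ b $ a = A $ b $ a" using cA by simp
    then show ?thesis by (simp add: ct_def)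
  qed
  have key: "Re (A$i$i) = Re (A$j$j) \<and> A$i$j = 0" if ij: "i \<noteq> j" for i j
  proof -
    have c2: "card (UNIV - {i, j}) = CARD('n) - 2"
      using ij by (simp add: card_Diff_subset)
    have "k - 1 \<le> card (UNIV - {i, j})" using c2 kn k1 by simp
    then obtain S where S: "S \<subseteq> UNIV - {i, j}" "card S = k - 1"
      by (rule obtain_subset_with_card_n)
    have iS: "i \<notin> S" and jS: "j \<notin> S" using S by auto
    have val: "\<bar>Re (trace (A ** Pm S a b p q))\<bar> = wk k A"
      if ab: "a \<noteq> b" "a \<notin> S" "b \<notin> S" "p \<noteq> 0" for a b p q
    proof -
      let ?P = "Pm S a b p q"
      have op: "orth_proj ?P" by (rule Pm_orth[OF ab])
      have tr: "trace ?P = of_nat k" using Pm_trace[OF ab] S k1 by simp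
      have rk: "rank ?P = k" using Pm_rank[OF ab] S k1 by simp
      have PP: "?P \<in> Pk k" using op tr by (simp add: Pk_def)
      have "wk_parallel k A ?P" using H op rk by blast
      then have c: "cmod (trace (A ** ?P)) = wk k A" by (rule parallel_proj[OF PP])
      have "Im (trace (A ** ?P)) = 0"
        by (rule trace_herm_real[OF hA]) (use op in \<open>simp add: orth_proj_def\<close>)
      then show ?thesis using c by (simp add: cmod_eq_Re)
    qed
    define X where "X = Re (\<Sum>a\<in>S. A$a$a)"
    define w where "w = wk k A"
    have hji: "A$j$i = cnj (A$i$j)" by (rule ent)
    have hij: "A$i$j = cnj (A$j$i)" by (simp add: hji)
    have ji: "j \<noteq> i" using ij by simp
    have v1: "\<bar>X + Re (A$i$i)\<bar> = w"
      using val[OF ij iS jS, of 1 0] re_val(7)[OF hji] by (simp add: Pm_trA[OF ij iS jS] X_def w_def)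
    have v2: "\<bar>X + Re (A$j$j)\<bar> = w"
      using val[OF ji jS iS, of 1 0] re_val(7)[OF hij] by (simp add: Pm_trA[OF ji jS iS] X_def w_def)
    have v3: "\<bar>X + (Re (A$i$i) + Re (A$j$j)) / 2 + Re (A$i$j)\<bar> = w"
      using val[OF ij iS jS, of 1 1] re_val(1)[OF hji] by (simp add: Pm_trA[OF ij iS jS] X_def w_def add.assoc)
    have v4: "\<bar>X + (Re (A$i$i) + Re (A$j$j)) / 2 - Re (A$i$j)\<bar> = w"
      using val[OF ij iS jS, of 1 "-1"] re_val(2)[OF hji] by (simp add: Pm_trA[OF ij iS jS] X_def w_def add.assoc add_diff_eq)
    have v5: "\<bar>X + (4 * Re (A$i$i) + Re (A$j$j)) / 5 + 4 * Re (A$i$j) / 5\<bar> = w"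
      using val[OF ij iS jS, of 2 1] re_val(3)[OF hji] by (simp add: Pm_trA[OF ij iS jS] X_def w_def add.assoc)
    have v6: "\<bar>X + (Re (A$i$i) + Re (A$j$j)) / 2 + (- Im (A$i$j))\<bar> = w"
      using val[OF ij iS jS, of 1 "\<i>"] re_val(4)[OF hji] by (simp add: Pm_trA[OF ij iS jS] X_def w_def add.assoc)
    have v7: "\<bar>X + (Re (A$i$i) + Re (A$j$j)) / 2 - (- Im (A$i$j))\<bar> = w"
      using val[OF ij iS jS, of 1 "-\<i>"] re_val(5)[OF hji] by (simp add: Pm_trA[OF ij iS jS] X_def w_def add.assoc add_diff_eq)
    have v8: "\<bar>X + (4 * Re (A$i$i) + Re (A$j$j)) / 5 + 4 * (- Im (A$i$j)) / 5\<bar> = w"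
      using val[OF ij iS jS, of 2 "\<i>"] re_val(6)[OF hji] by (simp add: Pm_trA[OF ij iS jS] X_def w_def add.assoc)
    have r1: "Re (A$i$i) = Re (A$j$j) \<and> Re (A$i$j) = 0" by (rule alg[OF v1 v2 v3 v4 v5])
    have r2: "Re (A$i$i) = Re (A$j$j) \<and> - Im (A$i$j) = 0" by (rule alg[OF v1 v2 v6 v7 v8])
    show ?thesis using r1 r2 by (simp add: complex_eq_iff)
  qed
  obtain i0 :: 'n where True by blast
  define \<gamma> where "\<gamma> = Re (A$i0$i0)"
  have diagreal: "Im (A$a$a) = 0" for a
    using ent[of a a] by (simp add: complex_eq_iff)
  have "A = mat (complex_of_real \<gamma>)"
  proof (unfold vec_eq_iff, intro allI)
    fix a b
    show "A$a$b = mat (complex_of_real \<gamma>) $ a $ b"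
    proof (cases "a = b")
      case True
      have "Re (A$a$a) = \<gamma>" using key[of a i0] unfolding \<gamma>_def by (cases "a = i0") auto
      then show ?thesis using True diagreal[of a] by (simp add: mat_def complex_eq_iff)
    next
      case False
      then show ?thesis using key[OF False] by (simp add: mat_def)
    qed
  qed
  then show ?thesis by blast
qed



theorem mainTheorem13:
  fixes A :: "complex^'n^'n" and k :: nat
  assumes "1 \<le> k" and "k < CARD('n)" and "hermitian A"
  shows "((\<exists>\<gamma>::real. A = mat (complex_of_real \<gamma>))
          \<longleftrightarrow> (\<forall>B::complex^'n^'n. hermitian B \<longrightarrow> wk_parallel k A B))
       \<and> ((\<forall>B::complex^'n^'n. hermitian B \<longrightarrow> wk_parallel k A B)
          \<longleftrightarrow> (\<forall>P::complex^'n^'n. orth_proj P \<and> rank P = k \<longrightarrow> wk_parallel k A P))"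
proof -
  have "k \<le> card (UNIV::'n set)" using assms(2) by simp
  then obtain S :: "'n set" where S: "card S = k" by (rule obtain_subset_with_card_n) blast
  have "orth_proj (Dm S)" by (simp add: orth_proj_def herm_ct Dm_herm Dm_idem)
  then have "Dm S \<in> Pk k" by (simp add: Pk_def trace_Dm S)
  then have ne: "Pk k \<noteq> ({}::(complex^'n^'n) set)" by blast
  have ab: "\<forall>B::complex^'n^'n. hermitian B \<longrightarrow> wk_parallel k A B"
    if "\<exists>\<gamma>::real. A = mat (complex_of_real \<gamma>)"
    using that scalar_parallel[OF _ ne] by blast
  have bc: "\<forall>P::complex^'n^'n. orth_proj P \<and> rank P = k \<longrightarrow> wk_parallel k A P"
    if "\<forall>B::complex^'n^'n. hermitian B \<longrightarrow> wk_parallel k A B"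
    using that by (simp add: orth_proj_def)
  have ca: "\<exists>\<gamma>::real. A = mat (complex_of_real \<gamma>)"
    if "\<forall>P::complex^'n^'n. orth_proj P \<and> rank P = k \<longrightarrow> wk_parallel k A P"
    by (rule c_to_a[OF assms that])
  show ?thesis using ab bc ca by blast
qed

end
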